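(* There is $\bar\varepsilon>0$ such that the following holds for all $x_0\in\mathbb R$ and $|\varepsilon|<\bar\varepsilon$. Put $y_0=Y(x_0,\varepsilon)$ and $\delta=\Delta(x_0,\varepsilon)$, and let $$(x_1,y_1)=T_{\varepsilon,\delta}(x_0,y_0).$$ Then $$\Delta(x_1,\varepsilon)=\Delta(x_0,\varepsilon)\qquad\text{and}\qquad Y(x_1,\varepsilon)=y_1.$$
   Context: Fix integers $p$ and $q\ge1$ and put $\mu=2\pi p/q$. Let $f:\mathbb R\to\mathbb R$ be a $2\pi$-periodic real-analytic function. For real parameters $\varepsilon,\delta$ set $g(x)=-\delta-\varepsilon f(x)$ and consider the map $T_{\varepsilon,\delta}(x,y)=(x+y+\mu+g(x),\;y+g(x))$ on $\mathbb R^2$. Define ${}_nR$ and ${}_nS$ by $T^n_{\varepsilon,\delta}(x_0,y_0)=(x_0+n\mu+{}_nR,\;y_0+{}_nS)$. There exist $\bar{\bar\varepsilon},\eta>0$ and real-analytic functions $\Delta(x,\varepsilon)$ and $Y(x,\varepsilon)$, defined for $x\in\mathbb R$ and $|\varepsilon|<\bar{\bar\varepsilon}$ and vanishing at $\varepsilon=0$, such that $(\delta,y)=(\Delta(x,\varepsilon),Y(x,\varepsilon))$ is the unique solution with $|\delta|,|y|<\eta$ of ${}_qR(x,y,\varepsilon,\delta)={}_qS(x,y,\varepsilon,\delta)=0$. *)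

theory Defs
  imports "HOL-Analysis.Analysis"
begin

definition real_analytic_on :: "(real \<Rightarrow> real) \<Rightarrow> real set \<Rightarrow> bool" where
  "real_analytic_on F S \<longleftrightarrow>
     (\<forall>x0\<in>S. \<exists>r>0. \<exists>c :: nat \<Rightarrow> real.
        \<forall>x. \<bar>x - x0\<bar> < r \<longrightarrow> ((\<lambda>i. c i * (x - x0) ^ i) has_sum F x) UNIV)"

definition real_analytic2_on :: "(real \<Rightarrow> real \<Rightarrow> real) \<Rightarrow> (real \<times> real) set \<Rightarrow> bool" where
  "real_analytic2_on F S \<longleftrightarrow>
     (\<forall>(x0, e0)\<in>S. \<exists>r>0. \<exists>c :: nat \<Rightarrow> nat \<Rightarrow> real.
        \<forall>x e. \<bar>x - x0\<bar> < r \<longrightarrow> \<bar>e - e0\<bar> < r \<longrightarrow>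
          ((\<lambda>(i, j). c i j * (x - x0) ^ i * (e - e0) ^ j) has_sum F x e) UNIV)"

definition Tmap :: "(real \<Rightarrow> real) \<Rightarrow> real \<Rightarrow> real \<Rightarrow> real \<Rightarrow> real \<times> real \<Rightarrow> real \<times> real" where
  "Tmap f mu eps delta = (\<lambda>(x, y).
     (let g = - delta - eps * f x in (x + y + mu + g, y + g)))"

definition nR :: "(real \<Rightarrow> real) \<Rightarrow> real \<Rightarrow> nat \<Rightarrow> real \<Rightarrow> real \<Rightarrow> real \<Rightarrow> real \<Rightarrow> real" where
  "nR f mu n x y eps delta = fst ((Tmap f mu eps delta ^^ n) (x, y)) - x - real n * mu"

definition nS :: "(real \<Rightarrow> real) \<Rightarrow> real \<Rightarrow> nat \<Rightarrow> real \<Rightarrow> real \<Rightarrow> real \<Rightarrow> real \<Rightarrow> real" where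
  "nS f mu n x y eps delta = snd ((Tmap f mu eps delta ^^ n) (x, y)) - y"

end

theory Submission
  imports Defs
begin

lemma loc2:
  fixes F :: "real \<Rightarrow> real \<Rightarrow> real"
  assumes an: "real_analytic2_on F (UNIV \<times> {-a<..<a})" and a: "a > 0"
    and z: "\<forall>x. F x 0 = 0"
  shows "\<exists>s>0. \<exists>K. \<forall>x e. \<bar>x - x0\<bar> < s \<longrightarrow> \<bar>e\<bar> < s \<longrightarrow> \<bar>F x e\<bar> \<le> K * \<bar>e\<bar>"
proof -
  have pt: "(x0, 0) \<in> UNIV \<times> {-a<..<a}" using a by auto
  have "\<exists>r>0. \<exists>c :: nat \<Rightarrow> nat \<Rightarrow> real. \<forall>x e. \<bar>x - x0\<bar> < r \<longrightarrow> \<bar>e - 0\<bar> < r \<longrightarrow>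
          ((\<lambda>(i, j). c i j * (x - x0) ^ i * (e - 0) ^ j) has_sum F x e) UNIV"
    using bspec[OF an[unfolded real_analytic2_on_def] pt] by simp
  then obtain r c where r: "r > 0" and hc: "\<And>x e. \<bar>x - x0\<bar> < r \<Longrightarrow> \<bar>e - 0\<bar> < r \<Longrightarrow>
          ((\<lambda>(i, j). c i j * (x - x0) ^ i * (e - 0) ^ j) has_sum F x e) UNIV"
    by blast
  define s where "s = r / 2"
  have s: "s > 0" "s < r" using r by (auto simp: s_def)
  have "((\<lambda>(i, j). c i j * (x0 + s - x0) ^ i * (s - 0) ^ j) has_sum F (x0+s) s) UNIV"
    using hc[of "x0+s" s] s by simp
  hence "(\<lambda>(i, j). c i j * s ^ i * s ^ j) summable_on UNIV"
    by (simp add: has_sum_imp_summable)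
  hence "(\<lambda>k. norm ((\<lambda>(i, j). c i j * s ^ i * s ^ j) k)) summable_on UNIV"
    by (rule summable_on_iff_abs_summable_on_real[THEN iffD1])
  moreover have "(\<lambda>k. norm ((\<lambda>(i, j). c i j * s ^ i * s ^ j) k)) = (\<lambda>(i, j). \<bar>c i j\<bar> * s ^ i * s ^ j)"
    using s by (simp add: fun_eq_iff abs_mult power_abs)
  ultimately obtain M where hM: "((\<lambda>(i, j). \<bar>c i j\<bar> * s ^ i * s ^ j) has_sum M) UNIV"
    unfolding summable_on_def by auto
  have main: "\<bar>F x e\<bar> \<le> M / s * \<bar>e\<bar>" if x: "\<bar>x - x0\<bar> < s" and e: "\<bar>e\<bar> < s" for x e
  proof -
    have h1: "((\<lambda>(i, j). c i j * (x - x0) ^ i * (e - 0) ^ j) has_sum F x e) UNIV"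
      using hc x e s by auto
    have h0: "((\<lambda>(i, j). c i j * (x - x0) ^ i * (0 - 0) ^ j) has_sum F x 0) UNIV"
      using hc x e s by auto
    define t where "t = (\<lambda>k. (\<lambda>(i, j). c i j * (x - x0) ^ i * (e - 0) ^ j) k
        + - (\<lambda>(i, j). c i j * (x - x0) ^ i * (0 - 0) ^ j) k)"
    have ht: "(t has_sum F x e) UNIV"
    proof -
      have h0': "((\<lambda>k. - (\<lambda>(i, j). c i j * (x - x0) ^ i * (0 - 0) ^ j) k) has_sum (- F x 0)) UNIV"
        using h0 by (simp add: has_sum_uminus)
      show ?thesis
        unfolding t_def using has_sum_add[OF h1 h0'] z by simp
    qed
    have hb: "((\<lambda>k. \<bar>e\<bar> / s * (\<lambda>(i, j). \<bar>c i j\<bar> * s ^ i * s ^ j) k) has_sum (\<bar>e\<bar> / s * M)) UNIV"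
      by (rule has_sum_cmult_right[OF hM])
    have bnd: "\<bar>t k\<bar> \<le> \<bar>e\<bar> / s * (\<lambda>(i, j). \<bar>c i j\<bar> * s ^ i * s ^ j) k" for k
    proof (cases k)
      case (Pair i j)
      show ?thesis
      proof (cases j)
        case 0 then show ?thesis using Pair s by (simp add: t_def)
      next
        case (Suc j')
        have "\<bar>t k\<bar> = \<bar>c i j\<bar> * \<bar>x - x0\<bar> ^ i * (\<bar>e\<bar> * \<bar>e\<bar> ^ j')"
          using Pair Suc by (simp add: t_def abs_mult power_abs)
        also have "\<dots> \<le> \<bar>c i j\<bar> * s ^ i * (\<bar>e\<bar> * s ^ j')"
          using x e by (intro mult_mono power_mono) auto
        also have "\<dots> = \<bar>e\<bar> / s * (\<bar>c i j\<bar> * s ^ i * s ^ j)"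
          using Suc s by (simp add: field_simps)
        finally show ?thesis using Pair by simp
      qed
    qed
    have "F x e \<le> \<bar>e\<bar> / s * M"
      by (rule has_sum_mono[OF ht hb]) (use bnd in \<open>auto simp: abs_le_iff\<close>)
    moreover have "- F x e \<le> \<bar>e\<bar> / s * M"
    proof -
      have htn: "((\<lambda>k. - t k) has_sum (- F x e)) UNIV" using ht by (simp add: has_sum_uminus)
      show ?thesis
        by (rule has_sum_mono[OF htn hb]) (use bnd in \<open>auto simp: abs_le_iff\<close>)
    qed
    ultimately show "\<bar>F x e\<bar> \<le> M / s * \<bar>e\<bar>" by (simp add: abs_le_iff mult.commute)
  qed
  show ?thesis using main s by blast
qed


lemma loc1:
  fixes f :: "real \<Rightarrow> real"
  assumes an: "real_analytic_on f UNIV"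
  shows "\<exists>s>0. \<exists>K. \<forall>x e::real. \<bar>x - x0\<bar> < s \<longrightarrow> \<bar>e\<bar> < s \<longrightarrow> \<bar>f x\<bar> \<le> K * 1"
proof -
  obtain r c where r: "r > 0" and hc: "\<And>x. \<bar>x - x0\<bar> < r \<Longrightarrow>
          ((\<lambda>i. c i * (x - x0) ^ i) has_sum f x) UNIV"
  proof -
    have "\<exists>r>0. \<exists>c :: nat \<Rightarrow> real. \<forall>x. \<bar>x - x0\<bar> < r \<longrightarrow> ((\<lambda>i. c i * (x - x0) ^ i) has_sum f x) UNIV"
      using bspec[OF an[unfolded real_analytic_on_def] UNIV_I] by simp
    then show ?thesis using that by blast
  qed
  define s where "s = r / 2"
  have s: "s > 0" "s < r" using r by (auto simp: s_def)
  have "((\<lambda>i. c i * s ^ i) has_sum f (x0+s)) UNIV"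
    using hc[of "x0+s"] s by simp
  hence "(\<lambda>i. c i * s ^ i) summable_on UNIV"
    by (rule has_sum_imp_summable)
  hence "(\<lambda>k. norm (c k * s ^ k)) summable_on UNIV"
    by (rule summable_on_iff_abs_summable_on_real[THEN iffD1])
  moreover have "(\<lambda>k. norm (c k * s ^ k)) = (\<lambda>i. \<bar>c i\<bar> * s ^ i)"
    using s by (simp add: fun_eq_iff abs_mult power_abs)
  ultimately obtain M where hM: "((\<lambda>i. \<bar>c i\<bar> * s ^ i) has_sum M) UNIV"
    unfolding summable_on_def by auto
  have main: "\<bar>f x\<bar> \<le> M * 1" if x: "\<bar>x - x0\<bar> < s" for x
  proof -
    have h1: "((\<lambda>i. c i * (x - x0) ^ i) has_sum f x) UNIV"
      using hc x s by simp
    have bnd: "\<bar>c k * (x - x0) ^ k\<bar> \<le> \<bar>c k\<bar> * s ^ k" for k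
      using x by (auto simp: abs_mult power_abs intro!: mult_left_mono power_mono)
    have "f x \<le> M"
      by (rule has_sum_mono[OF h1 hM]) (use bnd in \<open>auto simp: abs_le_iff\<close>)
    moreover have "- f x \<le> M"
    proof -
      have htn: "((\<lambda>i. - (c i * (x - x0) ^ i)) has_sum (- f x)) UNIV" using h1 by (simp add: has_sum_uminus)
      show ?thesis
        by (rule has_sum_mono[OF htn hM]) (use bnd in \<open>auto simp: abs_le_iff\<close>)
    qed
    ultimately show "\<bar>f x\<bar> \<le> M * 1" by (simp add: abs_le_iff)
  qed
  show ?thesis using main s by blast
qed

lemma unif:
  fixes F :: "real \<Rightarrow> real \<Rightarrow> real" and G :: "real \<Rightarrow> real"
  assumes loc: "\<forall>x0. \<exists>s>0. \<exists>K. \<forall>x e. \<bar>x - x0\<bar> < s \<longrightarrow> \<bar>e\<bar> < s \<longrightarrow> \<bar>F x e\<bar> \<le> K * G e"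
    and G: "\<forall>e. G e \<ge> 0"
  shows "\<exists>s>0. \<exists>K\<ge>0. \<forall>x\<in>{0..2*pi}. \<forall>e. \<bar>e\<bar> < s \<longrightarrow> \<bar>F x e\<bar> \<le> K * G e"
proof -
  obtain S K where SK: "\<And>x0. S x0 > 0"
     "\<And>x0 x e. \<bar>x - x0\<bar> < S x0 \<Longrightarrow> \<bar>e\<bar> < S x0 \<Longrightarrow> \<bar>F x e\<bar> \<le> K x0 * G e"
    using loc by metis
  have cov: "{0..2*pi} \<subseteq> (\<Union>c\<in>UNIV. ball c (S c))"
  proof
    fix x assume "x \<in> {0..2*pi}"
    have "x \<in> ball x (S x)" using SK(1)[of x] by simp
    then show "x \<in> (\<Union>c\<in>UNIV. ball c (S c))" by blast
  qed
  obtain C where C: "finite C" "{0..2*pi} \<subseteq> (\<Union>c\<in>C. ball c (S c))"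
    using compactE_image[OF compact_Icc, of UNIV "\<lambda>c. ball c (S c)", OF _ cov] by auto
  have Cne: "C \<noteq> {}" using C(2) pi_gt_zero by force
  define s where "s = Min (S ` C)"
  define KK where "KK = Max ((\<lambda>c. max 0 (K c)) ` C)"
  have spos: "s > 0" unfolding s_def using C(1) Cne SK(1) by auto
  have KKge: "max 0 (K c) \<le> KK" if "c \<in> C" for c
    unfolding KK_def using C(1) that by (intro Max_ge) auto
  have KKpos: "KK \<ge> 0" using KKge Cne by force
  have main: "\<bar>F x e\<bar> \<le> KK * G e" if x: "x \<in> {0..2*pi}" and e: "\<bar>e\<bar> < s" for x e
  proof -
    obtain c where c: "c \<in> C" "x \<in> ball c (S c)" using C(2) x by blast
    have "\<bar>x - c\<bar> < S c" using c(2) by (simp add: dist_real_def abs_minus_commute)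
    moreover have "s \<le> S c" unfolding s_def using C(1) c(1) by auto
    ultimately have "\<bar>F x e\<bar> \<le> K c * G e" using SK(2) e by auto
    also have "\<dots> \<le> max 0 (K c) * G e" using G by (intro mult_right_mono) auto
    also have "\<dots> \<le> KK * G e" using G KKge[OF c(1)]
      by (intro mult_right_mono) auto
    finally show "\<bar>F x e\<bar> \<le> KK * G e" .
  qed
  show ?thesis using main spos KKpos by blast
qed

lemma f_int_periodic:
  fixes f :: "real \<Rightarrow> real"
  assumes "\<forall>x. f (x + 2 * pi) = f x"
  shows "f (x + 2 * pi * real_of_int k) = f x"
proof -
  have n: "f (y + 2 * pi * real n) = f y" for y n
  proof (induction n)
    case 0 then show ?case by simp
  next
    case (Suc n)
    have "f (y + 2 * pi * real (Suc n)) = f ((y + 2 * pi * real n) + 2 * pi)"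
      by (simp add: algebra_simps)
    then show ?case using assms Suc by simp
  qed
  show ?thesis
  proof (cases "k \<ge> 0")
    case True
    then show ?thesis using n[of x "nat k"] by simp
  next
    case False
    then have "x = (x + 2 * pi * real_of_int k) + 2 * pi * real (nat (-k))" by simp
    then show ?thesis using n[of "x + 2 * pi * real_of_int k" "nat (-k)"] by metis
  qed
qed

lemma Tmap_shift:
  assumes "\<forall>x. f (x + c) = f x"
  shows "(Tmap f mu e d ^^ n) (x + c, y) = (fst ((Tmap f mu e d ^^ n) (x, y)) + c, snd ((Tmap f mu e d ^^ n) (x, y)))"
proof (induction n)
  case 0 then show ?case by simp
next
  case (Suc n)
  obtain a b where ab: "(Tmap f mu e d ^^ n) (x, y) = (a, b)" by (rule prod.exhaust)
  show ?case
    by (simp only: funpow.simps comp_def Suc ab) (simp add: Tmap_def Let_def assms)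
qed

theorem mainTheorem6:
  fixes p :: int and q :: nat and f :: "real \<Rightarrow> real"
    and Delta Y :: "real \<Rightarrow> real \<Rightarrow> real" and epsbb eta :: real
  defines "mu \<equiv> 2 * pi * real_of_int p / real q"
  assumes q_pos: "q \<ge> 1"
    and f_periodic: "\<forall>x. f (x + 2 * pi) = f x"
    and f_analytic: "real_analytic_on f UNIV"
    and epsbb_pos: "epsbb > 0" and eta_pos: "eta > 0"
    and Delta_analytic: "real_analytic2_on Delta (UNIV \<times> {-epsbb<..<epsbb})"
    and Y_analytic: "real_analytic2_on Y (UNIV \<times> {-epsbb<..<epsbb})"
    and Delta_zero: "\<forall>x. Delta x 0 = 0"
    and Y_zero: "\<forall>x. Y x 0 = 0"
    and solution: "\<forall>x eps. \<bar>eps\<bar> < epsbb \<longrightarrow>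
        \<bar>Delta x eps\<bar> < eta \<and> \<bar>Y x eps\<bar> < eta \<and>
        nR f mu q x (Y x eps) eps (Delta x eps) = 0 \<and>
        nS f mu q x (Y x eps) eps (Delta x eps) = 0"
    and unique: "\<forall>x eps delta y. \<bar>eps\<bar> < epsbb \<longrightarrow> \<bar>delta\<bar> < eta \<longrightarrow> \<bar>y\<bar> < eta \<longrightarrow>
        nR f mu q x y eps delta = 0 \<longrightarrow> nS f mu q x y eps delta = 0 \<longrightarrow>
        delta = Delta x eps \<and> y = Y x eps"
  shows "\<exists>epsb > 0. \<forall>x0 eps. \<bar>eps\<bar> < epsb \<longrightarrow>
          (let y0 = Y x0 eps; delta = Delta x0 eps;
               (x1, y1) = Tmap f mu eps delta (x0, y0)
           in Delta x1 eps = Delta x0 eps \<and> Y x1 eps = y1)"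
  proof -
  have qmu: "real q * mu = 2 * pi * real_of_int p"
    using q_pos unfolding mu_def by simp
  have per: "Delta (x + 2 * pi * real_of_int k) e = Delta x e \<and> Y (x + 2 * pi * real_of_int k) e = Y x e"
    if e: "\<bar>e\<bar> < epsbb" for x e k
  proof -
    have fc: "\<forall>x. f (x + 2 * pi * real_of_int k) = f x"
      using f_int_periodic[OF f_periodic] by blast
    note sh = Tmap_shift[OF fc]
    have "nR f mu q (x + 2 * pi * real_of_int k) (Y x e) e (Delta x e) = nR f mu q x (Y x e) e (Delta x e)"
      "nS f mu q (x + 2 * pi * real_of_int k) (Y x e) e (Delta x e) = nS f mu q x (Y x e) e (Delta x e)"
      unfolding nR_def nS_def sh by simp_all
    then show ?thesis using solution unique e by metis
  qed
  have red: "\<exists>x' k. x' \<in> {0..2*pi} \<and> x = x' + 2 * pi * real_of_int k" for x :: real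
  proof -
    define k where "k = \<lfloor>x / (2 * pi)\<rfloor>"
    have "real_of_int k \<le> x / (2*pi)" "x / (2*pi) < real_of_int k + 1"
      unfolding k_def by linarith+
    hence "2*pi*real_of_int k \<le> x" "x < 2*pi*(real_of_int k + 1)"
      using pi_gt_zero by (simp_all add: field_simps)
    hence "x - 2 * pi * real_of_int k \<in> {0..2*pi}" by (auto simp: algebra_simps)
    then show ?thesis by (intro exI[of _ "x - 2 * pi * real_of_int k"] exI[of _ k]) auto
  qed
  obtain s1 K1 where s1: "s1 > 0" "K1 \<ge> 0" "\<forall>x\<in>{0..2*pi}. \<forall>e. \<bar>e\<bar> < s1 \<longrightarrow> \<bar>Delta x e\<bar> \<le> K1 * \<bar>e\<bar>"
  proof -
    have "\<exists>s>0. \<exists>K\<ge>0. \<forall>x\<in>{0..2*pi}. \<forall>e. \<bar>e\<bar> < s \<longrightarrow> \<bar>Delta x e\<bar> \<le> K * \<bar>e\<bar>"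
      by (rule unif[OF allI[OF loc2[OF Delta_analytic epsbb_pos Delta_zero]]]) simp
    then show ?thesis using that by blast
  qed
  obtain s2 K2 where s2: "s2 > 0" "K2 \<ge> 0" "\<forall>x\<in>{0..2*pi}. \<forall>e. \<bar>e\<bar> < s2 \<longrightarrow> \<bar>Y x e\<bar> \<le> K2 * \<bar>e\<bar>"
  proof -
    have "\<exists>s>0. \<exists>K\<ge>0. \<forall>x\<in>{0..2*pi}. \<forall>e. \<bar>e\<bar> < s \<longrightarrow> \<bar>Y x e\<bar> \<le> K * \<bar>e\<bar>"
      by (rule unif[OF allI[OF loc2[OF Y_analytic epsbb_pos Y_zero]]]) simp
    then show ?thesis using that by blast
  qed
  obtain s3 B where s3: "s3 > 0" "B \<ge> 0" "\<forall>x\<in>{0..2*pi}. \<forall>e::real. \<bar>e\<bar> < s3 \<longrightarrow> \<bar>f x\<bar> \<le> B * 1"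
  proof -
    have "\<exists>s>0. \<exists>K\<ge>0. \<forall>x\<in>{0..2*pi}. \<forall>e::real. \<bar>e\<bar> < s \<longrightarrow> \<bar>f x\<bar> \<le> K * 1"
      by (rule unif[OF allI[OF loc1[OF f_analytic]]]) simp
    then show ?thesis using that by blast
  qed
  define epsb where "epsb = Min {epsbb, s1, s2, s3, eta / (K1 + K2 + B + 1)}"
  have epsb_pos: "epsb > 0" unfolding epsb_def using s1 s2 s3 epsbb_pos eta_pos by auto
  have le: "epsb \<le> epsbb" "epsb \<le> s1" "epsb \<le> s2" "epsb \<le> s3" "epsb \<le> eta / (K1 + K2 + B + 1)"
    unfolding epsb_def by auto
  have bounds: "\<bar>Delta x e\<bar> \<le> K1 * \<bar>e\<bar> \<and> \<bar>Y x e\<bar> \<le> K2 * \<bar>e\<bar> \<and> \<bar>f x\<bar> \<le> B"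
    if e: "\<bar>e\<bar> < epsb" for x e
  proof -
    obtain x' k where x': "x' \<in> {0..2*pi}" "x = x' + 2 * pi * real_of_int k" using red by blast
    have "\<bar>e\<bar> < epsbb" using e le by auto
    then have "Delta x e = Delta x' e" "Y x e = Y x' e" using per x'(2) by auto
    moreover have "f x = f x'" using f_int_periodic[OF f_periodic] x'(2) by simp
    moreover have "\<bar>f x'\<bar> \<le> B" using s3(3)[rule_format, OF x'(1), of 0] s3(1) by simp
    moreover have "\<bar>e\<bar> < s1" "\<bar>e\<bar> < s2" using e le by auto
    ultimately show ?thesis using s1(3) s2(3) x'(1) by auto
  qed
  show ?thesis
  proof (intro exI[of _ epsb] conjI epsb_pos allI impI)
    fix x0 eps assume e: "\<bar>eps\<bar> < epsb"
    have ee: "\<bar>eps\<bar> < epsbb" using e le by auto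
    define y0 where "y0 = Y x0 eps"
    define d where "d = Delta x0 eps"
    define T where "T = Tmap f mu eps d"
    define x1 where "x1 = fst (T (x0, y0))"
    define y1 where "y1 = snd (T (x0, y0))"
    have Tx: "T (x0, y0) = (x1, y1)" by (simp add: x1_def y1_def)
    have x1y1: "x1 = x0 + y0 + mu + (- d - eps * f x0)" "y1 = y0 + (- d - eps * f x0)"
      using Tx by (auto simp: T_def Tmap_def Let_def)
    have sol: "nR f mu q x0 y0 eps d = 0" "nS f mu q x0 y0 eps d = 0" "\<bar>d\<bar> < eta"
      using solution ee by (auto simp: y0_def d_def)
    have Tq0: "(T ^^ q) (x0, y0) = (x0 + real q * mu, y0)"
      using sol(1,2) unfolding nR_def nS_def T_def by (simp add: prod_eq_iff)
    have fc: "\<forall>x. f (x + 2 * pi * real_of_int p) = f x"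
      using f_int_periodic[OF f_periodic] by blast
    have "(T ^^ q) (x1, y1) = T ((T ^^ q) (x0, y0))"
      by (simp add: Tx[symmetric] funpow_swap1)
    also have "\<dots> = T (x0 + 2 * pi * real_of_int p, y0)" using Tq0 qmu by simp
    also have "\<dots> = (x1 + 2 * pi * real_of_int p, y1)"
      using Tmap_shift[OF fc, where n=1 and x=x0 and y=y0 and mu=mu and e=eps and d=d] Tx by (simp add: T_def)
    finally have Tq1: "(T ^^ q) (x1, y1) = (x1 + real q * mu, y1)" using qmu by simp
    have z1: "nR f mu q x1 y1 eps d = 0" "nS f mu q x1 y1 eps d = 0"
      unfolding nR_def nS_def using Tq1 by (simp_all add: T_def)
    have bx: "\<bar>d\<bar> \<le> K1 * \<bar>eps\<bar>" "\<bar>y0\<bar> \<le> K2 * \<bar>eps\<bar>" "\<bar>f x0\<bar> \<le> B"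
      using bounds[OF e] by (auto simp: d_def y0_def)
    have "\<bar>y1\<bar> \<le> \<bar>y0\<bar> + \<bar>d\<bar> + \<bar>eps\<bar> * \<bar>f x0\<bar>"
      unfolding x1y1 by (simp add: abs_mult[symmetric]) 
    also have "\<dots> \<le> K2 * \<bar>eps\<bar> + K1 * \<bar>eps\<bar> + \<bar>eps\<bar> * B"
      using bx by (intro add_mono mult_left_mono) auto
    also have "\<dots> = (K1 + K2 + B) * \<bar>eps\<bar>" by (simp add: algebra_simps)
    also have "\<dots> \<le> (K1 + K2 + B + 1) * \<bar>eps\<bar>" by (simp add: mult_right_mono)
    also have "\<dots> < (K1 + K2 + B + 1) * (eta / (K1 + K2 + B + 1))"
      using e le s1 s2 s3 by (intro mult_strict_left_mono) auto
    also have "\<dots> = eta" using s1 s2 s3 by simp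
    finally have y1s: "\<bar>y1\<bar> < eta" .
    have "d = Delta x1 eps \<and> y1 = Y x1 eps"
      using unique ee sol(3) y1s z1 by blast
    then show "let y0 = Y x0 eps; delta = Delta x0 eps;
               (x1, y1) = Tmap f mu eps delta (x0, y0)
           in Delta x1 eps = Delta x0 eps \<and> Y x1 eps = y1"
      using Tx by (simp add: Let_def y0_def d_def T_def)
  qed
qed

end
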